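(* Let $p$ be a prime number, and let $N,n\ge 1$ and $\nu\ge 0$ be integers with $n\not\equiv 0\pmod{p-1}$. If $$\mathrm{ord}_p(N-1)\ \ge\ \nu+1+\mathrm{ord}_p\Big(\prod_{k=0}^{n}(1+k)!\Big)+\mathrm{ord}_p(n),$$ then $$\frac{B_{N,n}}{n}\equiv\frac{B_n}{n}\pmod{p^{\nu+1}}.$$
   Context: For a positive integer $N$, the hypergeometric Bernoulli numbers $B_{N,n}$ are defined by $\frac{x^N/N!}{e^x-\sum_{n=0}^{N-1}x^n/n!}=\sum_{n\ge0} B_{N,n}\frac{x^n}{n!}$, and the classical Bernoulli numbers $B_n$ by $\frac{x}{e^x-1}=\sum_{n\ge0}B_n\frac{x^n}{n!}$. $\mathrm{ord}_p$ denotes the $p$-adic valuation on $\mathbb{Q}$ (with $\mathrm{ord}_p(0)=\infty$); for rationals $a,b$, $a\equiv b\pmod{p^s}$ means $\mathrm{ord}_p(a-b)\ge s$. *)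

theory Defs
  imports "HOL-Computational_Algebra.Computational_Algebra"
begin

definition hyp_bernoulli :: "nat \<Rightarrow> nat \<Rightarrow> rat" where
  "hyp_bernoulli N n = fact n *
     ((fps_X ^ N / fps_const (fact N)) /
      (fps_exp 1 - (\<Sum>k<N. fps_X ^ k / fps_const (fact k)))) $ n"

definition bernoulli_num :: "nat \<Rightarrow> rat" where
  "bernoulli_num n = fact n * (fps_X / (fps_exp 1 - 1)) $ n"

text \<open>p-adic valuation of a nonzero rational (value for 0 is irrelevant, see qcong).\<close>
definition ord_rat :: "nat \<Rightarrow> rat \<Rightarrow> int" where
  "ord_rat p q = (let (a, b) = quotient_of q in
      int (multiplicity (int p) a) - int (multiplicity (int p) b))"

text \<open>a \<equiv> b (mod p^s) for rationals: ord_p(a-b) \<ge> s, with ord_p 0 = \<infinity>.\<close>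
definition qcong :: "nat \<Rightarrow> nat \<Rightarrow> rat \<Rightarrow> rat \<Rightarrow> bool" where
  "qcong p s a b \<longleftrightarrow> a = b \<or> int s \<le> ord_rat p (a - b)"

end

theory Submission
  imports Defs
begin


definition pge :: "nat \<Rightarrow> int \<Rightarrow> rat \<Rightarrow> bool" where
  "pge p s x \<longleftrightarrow> (\<exists>a b. b \<noteq> 0 \<and> \<not> int p dvd b \<and> x = of_int a / of_int b * of_nat p powi s)"

lemma pgeI: "b \<noteq> 0 \<Longrightarrow> \<not> int p dvd b \<Longrightarrow> x = of_int a / of_int b * of_nat p powi s \<Longrightarrow> pge p s x"
  unfolding pge_def by blast

context fixes p :: nat assumes pp: "prime p" begin

lemma pp0: "(of_nat p :: rat) \<noteq> 0" using pp by (auto dest: prime_gt_0_nat)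

lemma pge_add: assumes "pge p s x" "pge p s y" shows "pge p s (x + y)"
proof -
  obtain a b where ab: "b \<noteq> 0" "\<not> int p dvd b" "x = of_int a / of_int b * of_nat p powi s"
    using assms(1) unfolding pge_def by blast
  obtain c d where cd: "d \<noteq> 0" "\<not> int p dvd d" "y = of_int c / of_int d * of_nat p powi s"
    using assms(2) unfolding pge_def by blast
  have "prime (int p)" using pp by simp
  hence "\<not> int p dvd b * d" using ab cd by (simp add: prime_dvd_mult_iff)
  moreover have "x + y = of_int (a*d + c*b) / of_int (b*d) * of_nat p powi s"
    using ab cd by (simp add: field_simps)
  ultimately show ?thesis using ab cd by (auto intro!: pgeI[where a="a*d+c*b" and b="b*d"])
qed

lemma pge_mult: assumes "pge p s x" "pge p t y" shows "pge p (s + t) (x * y)"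
proof -
  obtain a b where ab: "b \<noteq> 0" "\<not> int p dvd b" "x = of_int a / of_int b * of_nat p powi s"
    using assms(1) unfolding pge_def by blast
  obtain c d where cd: "d \<noteq> 0" "\<not> int p dvd d" "y = of_int c / of_int d * of_nat p powi t"
    using assms(2) unfolding pge_def by blast
  have "prime (int p)" using pp by simp
  hence "\<not> int p dvd b * d" using ab cd by (simp add: prime_dvd_mult_iff)
  moreover have "x * y = of_int (a*c) / of_int (b*d) * of_nat p powi (s+t)"
    using ab cd pp0 by (simp add: field_simps power_int_add)
  ultimately show ?thesis using ab cd by (auto intro!: pgeI[where a="a*c" and b="b*d"])
qed

lemma pge_mono: assumes "pge p s x" "t \<le> s" shows "pge p t x"
proof -
  obtain a b where ab: "b \<noteq> 0" "\<not> int p dvd b" "x = of_int a / of_int b * of_nat p powi s"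
    using assms(1) unfolding pge_def by blast
  have "(of_nat p :: rat) powi s = of_nat p ^ nat (s - t) * of_nat p powi t"
    using pp0 assms(2) by (simp flip: power_int_add power_int_of_nat)
  hence "x = of_int (a * int p ^ nat (s - t)) / of_int b * of_nat p powi t"
    using ab by simp
  thus ?thesis using ab by (intro pgeI[OF ab(1,2)])
qed

lemma pge_int: "pge p 0 (of_int a)"
  using pp by (auto intro!: pgeI[where a=a and b=1] simp: prime_gt_1_nat)

lemma pge_0: "pge p s 0"
  using pp by (auto intro!: pgeI[where a=0 and b=1] simp: prime_gt_1_nat)

lemma pge_uminus: "pge p s x \<Longrightarrow> pge p s (- x)"
  unfolding pge_def by (metis minus_divide_left mult_minus_left of_int_minus)

lemma pge_diff: "pge p s x \<Longrightarrow> pge p s y \<Longrightarrow> pge p s (x - y)"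
  using pge_add[of s x "-y"] pge_uminus by simp

lemma pge_sum: "(\<And>i. i \<in> A \<Longrightarrow> pge p s (f i)) \<Longrightarrow> pge p s (\<Sum>i\<in>A. f i)"
  by (induction A rule: infinite_finite_induct) (auto simp: pge_0 pge_add)

lemma pge_ppow: "pge p (int k) (of_nat p ^ k)"
  using pp by (auto intro!: pgeI[where a=1 and b=1] simp: prime_gt_1_nat)

lemma pge_nat_mult: assumes "m > 0"
  shows "pge p (int (multiplicity p m)) (of_nat m)" "pge p (- int (multiplicity p m)) (1 / of_nat m)"
proof -
  obtain v where v: "m = p ^ multiplicity p m * v" "\<not> p dvd v"
    using assms pp by (metis multiplicity_decompose' not_prime_unit neq0_conv)
  define e where "e = multiplicity p m"
  have me: "m = p ^ e * v" using v e_def by simp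
  have v0: "v \<noteq> 0" using v assms by (metis mult_0_right less_irrefl)
  have nd: "\<not> int p dvd int v" using v by simp
  have "(of_nat m :: rat) = of_int (int v) / of_int 1 * of_nat p powi (int e)"
    unfolding me by simp
  thus "pge p (int (multiplicity p m)) (of_nat m)"
    unfolding e_def[symmetric] using nd pp by (auto intro!: pgeI[where a="int v" and b=1] simp: prime_gt_1_nat)
  have "1 / (of_nat m :: rat) = of_int 1 / of_int (int v) * of_nat p powi (- int e)"
    unfolding me using pp0 by (simp add: power_int_minus field_simps)
  thus "pge p (- int (multiplicity p m)) (1 / of_nat m)"
    unfolding e_def[symmetric] using nd v0 by (auto intro!: pgeI[where a=1 and b="int v"])
qed

lemma pge_unit: assumes "pge p s t" "s \<ge> 1"
  shows "pge p 0 (1 / (1 + t))" "pge p s (1 / (1 + t) - 1)"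
proof -
  obtain a b where ab: "b \<noteq> 0" "\<not> int p dvd b" "t = of_int a / of_int b * of_nat p powi s"
    using assms(1) unfolding pge_def by blast
  define e where "e = nat s"
  have s: "s = int e" using assms e_def by simp
  have e: "e \<ge> 1" using assms s by simp
  have t: "t = of_int (a * int p ^ e) / of_int b" using ab s by simp
  have nd: "\<not> int p dvd b + a * int p ^ e"
  proof
    assume "int p dvd b + a * int p ^ e"
    moreover have "int p dvd a * int p ^ e" using e by (simp add: dvd_power)
    ultimately have "int p dvd b" using dvd_add_left_iff by blast
    thus False using ab by simp
  qed
  hence nz: "b + a * int p ^ e \<noteq> 0" by (metis dvd_0_right)
  have nz': "(of_int b + of_int a * of_nat p ^ e :: rat) \<noteq> 0"
  proof -
    have "(of_int (b + a * int p ^ e) :: rat) \<noteq> 0" using nz by (simp only: of_int_eq_0_iff) simp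
    thus ?thesis by simp
  qed
  have tt: "1 + t = (of_int b + of_int a * of_nat p ^ e) / of_int b"
    using t ab by (simp add: field_simps)
  have t1: "1 / (1 + t) = of_int b / (of_int b + of_int a * of_nat p ^ e)"
    unfolding tt using ab nz' by simp
  have "1 / (1 + t) = of_int b / of_int (b + a * int p ^ e)"
    unfolding t1 by simp
  thus "pge p 0 (1 / (1 + t))" using nd nz
    by (auto intro!: pgeI[where a=b and b="b + a * int p ^ e"])
  have "1 / (1 + t) - 1 = of_int (- a) / of_int (b + a * int p ^ e) * of_nat p powi s"
    unfolding t1 using ab nz' s by (simp add: field_simps)
  thus "pge p s (1 / (1 + t) - 1)" using nd nz
    by (auto intro!: pgeI[where a="-a" and b="b + a * int p ^ e"])
qed

end



lemma pge_ord:
  assumes pp: "prime p" and x0: "x \<noteq> 0" and h: "pge p s x"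
  shows "s \<le> ord_rat p x"
proof -
  obtain a b where ab: "b \<noteq> 0" "\<not> int p dvd b" "x = of_int a / of_int b * of_nat p powi s"
    using h unfolding pge_def by blast
  obtain a' b' where q: "quotient_of x = (a', b')" by (cases "quotient_of x")
  have b'0: "b' > 0" using q by (rule quotient_of_denom_pos)
  have xq: "x = of_int a' / of_int b'" using q by (rule quotient_of_div)
  have a'0: "a' \<noteq> 0" using xq x0 by auto
  have a0: "a \<noteq> 0" using ab x0 by auto
  have p0: "(of_nat p :: rat) \<noteq> 0" using pp by (auto dest: prime_gt_0_nat)
  have pw: "(of_nat p :: rat) powi s = of_nat p ^ nat s / of_nat p ^ nat (- s)"
  proof (cases "s \<ge> 0")
    case True
    hence "s = int (nat s)" by simp
    hence "(of_nat p :: rat) powi s = of_nat p powi (int (nat s))" by simp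
    also have "\<dots> = of_nat p ^ nat s" by (rule power_int_of_nat)
    finally show ?thesis using True by simp
  next
    case False
    hence "s = - int (nat (- s))" by simp
    hence "(of_nat p :: rat) powi s = of_nat p powi (- int (nat (- s)))" by simp
    also have "\<dots> = inverse (of_nat p ^ nat (- s))" by (simp only: power_int_minus power_int_of_nat)
    finally show ?thesis using False by (simp add: divide_inverse)
  qed
  have "(of_int (a' * b * int p ^ nat (- s)) :: rat) = of_int (a * b' * int p ^ nat s)"
  proof -
    have "of_int a' / of_int b' = (of_int a / of_int b * (of_nat p ^ nat s / of_nat p ^ nat (- s)) :: rat)"
      using xq ab pw by simp
    thus ?thesis using ab b'0 p0 by (simp add: field_simps)
  qed
  hence eq: "a' * b * int p ^ nat (- s) = a * b' * int p ^ nat s" by (simp only: of_int_eq_iff)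
  have ppi: "prime_elem (int p)" using pp by simp
  have pz: "int p \<noteq> 0" using pp by (auto dest: prime_gt_0_nat)
  have "multiplicity (int p) (a' * b * int p ^ nat (- s)) =
        multiplicity (int p) a' + multiplicity (int p) b + nat (- s)"
    using ppi a'0 ab(1) pz by (simp add: prime_elem_multiplicity_mult_distrib)
  moreover have "multiplicity (int p) (a * b' * int p ^ nat s) =
        multiplicity (int p) a + multiplicity (int p) b' + nat s"
    using ppi a0 b'0 pz by (simp add: prime_elem_multiplicity_mult_distrib)
  moreover have "multiplicity (int p) b = 0" using ab(2) by (rule not_dvd_imp_multiplicity_0)
  ultimately have E: "multiplicity (int p) a' + nat (- s) =
      multiplicity (int p) a + multiplicity (int p) b' + nat s"
    using eq by simp
  have E': "int (multiplicity (int p) a') + int (nat (- s)) =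
      int (multiplicity (int p) a) + int (multiplicity (int p) b') + int (nat s)"
    by (simp only: of_nat_add[symmetric] of_nat_eq_iff E)
  have "s \<le> int (multiplicity (int p) a') - int (multiplicity (int p) b')"
  proof (cases "s \<ge> 0")
    case True
    hence "int (nat (- s)) = 0" "int (nat s) = s" by simp_all
    thus ?thesis using E' by linarith
  next
    case False
    hence "int (nat s) = 0" "int (nat (- s)) = - s" by simp_all
    thus ?thesis using E' by linarith
  qed
  thus ?thesis unfolding ord_rat_def q by simp
qed




lemma hyp_rec:
  fixes N :: nat assumes N1: "N \<ge> 1"
  shows "hyp_bernoulli N 0 = 1"
    and "m \<ge> 1 \<Longrightarrow> hyp_bernoulli N m / fact m =
           - (\<Sum>i<m. (fact N / fact (m - i + N)) * (hyp_bernoulli N i / fact i))"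
proof -
  define F where "F = (fps_X ^ N / fps_const (fact N) :: rat fps)"
  define D where "D = (fps_exp 1 - (\<Sum>k<N. fps_X ^ k / fps_const (fact k)) :: rat fps)"
  define g where "g = F / D"
  have hyp: "hyp_bernoulli N j = fact j * g $ j" for j
    unfolding hyp_bernoulli_def g_def F_def D_def by simp
  have Dn: "D $ j = (if j < N then 0 else 1 / fact j)" for j
  proof -
    have "(\<Sum>k<N. fps_X ^ k / fps_const (fact k) :: rat fps) $ j
          = (\<Sum>k<N. (if j = k then inverse (fact k) else 0))"
      unfolding fps_sum_nth by (intro sum.cong refl) simp
    also have "\<dots> = (if j < N then inverse (fact j) else 0)"
      by (simp add: sum.delta)
    finally show ?thesis unfolding D_def by (simp add: divide_inverse)
  qed
  have Fn: "F $ j = (if j = N then 1 / fact N else 0)" for j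
    unfolding F_def by (simp add: divide_inverse)
  have D0: "D \<noteq> 0"
  proof
    assume "D = 0"
    hence "D $ N = 0" by simp
    thus False using Dn[of N] by simp
  qed
  have F0: "F \<noteq> 0"
  proof
    assume "F = 0"
    hence "F $ N = 0" by simp
    thus False using Fn[of N] by simp
  qed
  have sD: "subdegree D = N" by (rule subdegreeI) (simp_all add: Dn)
  have sF: "subdegree F = N" by (rule subdegreeI) (simp_all add: Fn)
  have "D dvd F" using D0 F0 sD sF by (simp add: fps_dvd_iff)
  hence gD: "g * D = F" unfolding g_def by (rule dvd_div_mult_self)
  have key: "(\<Sum>i=0..m. g $ i / fact (m + N - i)) = (if m = 0 then 1 / fact N else 0)" for m
  proof -
    have "(\<Sum>i=0..m+N. g $ i * D $ (m + N - i)) = (\<Sum>i=0..m. g $ i * D $ (m + N - i))"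
      by (rule sum.mono_neutral_right) (auto simp: Dn)
    also have "\<dots> = (\<Sum>i=0..m. g $ i / fact (m + N - i))"
      by (rule sum.cong) (auto simp: Dn divide_inverse)
    finally have "(g * D) $ (m + N) = (\<Sum>i=0..m. g $ i / fact (m + N - i))"
      by (simp add: fps_mult_nth)
    thus ?thesis using gD Fn[of "m+N"] by simp
  qed
  have "g $ 0 / fact N = 1 / fact N" using key[of 0] by simp
  hence g0: "g $ 0 = 1" by (simp add: field_simps)
  show "hyp_bernoulli N 0 = 1" by (simp add: hyp g0)
  assume m1: "m \<ge> 1"
  have "(\<Sum>i=0..m. g $ i / fact (m + N - i)) = 0" using key[of m] m1 by simp
  moreover have "(\<Sum>i=0..m. g $ i / fact (m + N - i)) = g $ m / fact N + (\<Sum>i<m. g $ i / fact (m + N - i))"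
    by (simp add: atLeast0AtMost lessThan_Suc_atMost[symmetric] add.commute)
  ultimately have "g $ m = - fact N * (\<Sum>i<m. g $ i / fact (m + N - i))"
    by (simp add: field_simps)
  also have "\<dots> = - (\<Sum>i<m. fact N * (g $ i / fact (m + N - i)))"
    by (simp only: sum_distrib_left mult_minus_left sum_negf)
  also have "\<dots> = - (\<Sum>i<m. (fact N / fact (m - i + N)) * g $ i)"
  proof -
    have "m + N - i = m - i + N" if "i < m" for i using that by simp
    thus ?thesis by (intro arg_cong[where f=uminus] sum.cong) auto
  qed
  finally show "hyp_bernoulli N m / fact m =
           - (\<Sum>i<m. (fact N / fact (m - i + N)) * (hyp_bernoulli N i / fact i))"
    by (simp add: hyp)
qed

lemma bern_hyp1: "bernoulli_num n = hyp_bernoulli 1 n"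
  unfolding bernoulli_num_def hyp_bernoulli_def by simp




lemma pm1_dvd: fixes p a :: nat assumes "p \<ge> 1" shows "(p - 1) dvd (p ^ a - 1)"
proof -
  have "int (p ^ a - 1) = int p ^ a - 1" using assms by (simp add: of_nat_diff)
  also have "\<dots> = (int p - 1) * (\<Sum>i<a. int p ^ i)" by (rule power_diff_1_eq)
  finally have "int (p - 1) dvd int (p ^ a - 1)" using assms by (simp add: of_nat_diff)
  thus ?thesis by (simp only: of_nat_dvd_iff)
qed

lemma ord_succ:
  fixes p n :: nat assumes pp: "prime p" and nd: "\<not> (p - 1) dvd n" and n1: "n \<ge> 1"
  shows "multiplicity p (n + 1) \<le> multiplicity p (fact n)"
proof -
  define a where "a = multiplicity p (n + 1)"
  obtain c where c: "n + 1 = p ^ a * c"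
    using multiplicity_dvd[of p "n+1"] unfolding a_def by (auto elim: dvdE)
  have c0: "c \<ge> 1" using c by (cases c) auto
  have p1: "p \<ge> 1" using prime_gt_0_nat[OF pp] by simp
  have pa1: "p ^ a \<ge> 1" using p1 by simp
  show ?thesis
  proof (cases "c = 1")
    case True
    hence "n = p ^ a - 1" using c by simp
    hence "(p - 1) dvd n" using pm1_dvd[OF p1] by simp
    thus ?thesis using nd by simp
  next
    case False
    hence "c \<ge> 2" using c0 by simp
    hence "p ^ a * 2 \<le> n + 1" unfolding c by simp
    hence "p ^ a \<le> n" using pa1 by linarith
    hence "p ^ a dvd fact n" using pa1 by (intro dvd_fact) auto
    hence "a \<le> multiplicity p (fact n)"
      using pp by (intro multiplicity_geI) (auto simp: fact_nonzero)
    thus ?thesis unfolding a_def .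
  qed
qed

definition PP :: "nat \<Rightarrow> nat" where "PP m = (\<Prod>k=0..m. fact (1 + k))"

lemma PP_pos: "PP m > 0" unfolding PP_def by (simp add: fact_gt_zero)

lemma PP_dvd: assumes "i < m" shows "PP i * fact (m - i + 1) dvd PP m"
proof -
  have split: "{0..m} = {0..i} \<union> {Suc i..m}" using assms by auto
  have "PP m = PP i * (\<Prod>k=Suc i..m. fact (1 + k))"
    unfolding PP_def split by (subst prod.union_disjoint) auto
  moreover have "fact (m - i + 1) dvd (fact (1 + m) :: nat)" by (rule fact_dvd) simp
  moreover have "fact (1 + m) dvd (\<Prod>k=Suc i..m. fact (1 + k) :: nat)"
    using assms by (intro dvd_prodI) auto
  ultimately show ?thesis by (metis dvd_trans mult_dvd_mono dvd_refl)
qed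

lemma pge_mult': "prime p \<Longrightarrow> pge p s x \<Longrightarrow> pge p t y \<Longrightarrow> r \<le> s + t \<Longrightarrow> pge p r (x * y)"
  using pge_mult pge_mono by blast

lemma pge_mult0l: "prime p \<Longrightarrow> pge p 0 x \<Longrightarrow> pge p s y \<Longrightarrow> pge p s (x * y)"
  using pge_mult[of p 0 x s y] by simp
lemma pge_mult0r: "prime p \<Longrightarrow> pge p s x \<Longrightarrow> pge p 0 y \<Longrightarrow> pge p s (x * y)"
  using pge_mult[of p s x 0 y] by simp

lemma pge_nat: "prime p \<Longrightarrow> pge p 0 (of_nat k)"
  using pge_int[of p "int k"] by simp

lemma main_ind:
  fixes b1 b2 u1 u2 :: "nat \<Rightarrow> rat" and n :: nat and S :: int
  assumes pp: "prime p" and S0: "S \<ge> 0"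
    and b10: "b1 0 = 1" and b20: "b2 0 = 1"
    and r1: "\<And>m. 1 \<le> m \<Longrightarrow> m \<le> n \<Longrightarrow> b1 m = - (\<Sum>i<m. (u1 (m - i) / fact (m - i + 1)) * b1 i)"
    and r2: "\<And>m. 1 \<le> m \<Longrightarrow> m \<le> n \<Longrightarrow> b2 m = - (\<Sum>i<m. (u2 (m - i) / fact (m - i + 1)) * b2 i)"
    and u: "\<And>k. 1 \<le> k \<Longrightarrow> k \<le> n \<Longrightarrow> pge p 0 (u1 k) \<and> pge p 0 (u2 k) \<and> pge p S (u1 k - u2 k)"
  shows "m \<le> n \<Longrightarrow> pge p 0 (b1 m * of_nat (PP m)) \<and> pge p 0 (b2 m * of_nat (PP m))
           \<and> pge p S ((b1 m - b2 m) * of_nat (PP m))"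
proof (induction m rule: less_induct)
  case (less m)
  show ?case
  proof (cases "m = 0")
    case True
    thus ?thesis using b10 b20 pp by (simp add: pge_0 pge_nat)
  next
    case False
    hence m1: "1 \<le> m" by simp
    define q where "q i = PP m div (PP i * fact (m - i + 1))" for i
    have q: "of_nat (PP m) = (of_nat (PP i) * fact (m - i + 1) * of_nat (q i) :: rat)" if "i < m" for i
    proof -
      have "PP m = PP i * fact (m - i + 1) * q i"
        unfolding q_def using PP_dvd[OF that] by simp
      hence "(of_nat (PP m) :: rat) = of_nat (PP i * fact (m - i + 1) * q i)" by simp
      thus ?thesis by (simp only: of_nat_mult of_nat_fact)
    qed
    have IH: "pge p 0 (b1 i * of_nat (PP i)) \<and> pge p 0 (b2 i * of_nat (PP i))
           \<and> pge p S ((b1 i - b2 i) * of_nat (PP i))" if "i < m" for i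
      using less.IH[OF that] less.prems that by simp
    have uu: "pge p 0 (u1 (m - i)) \<and> pge p 0 (u2 (m - i)) \<and> pge p S (u1 (m - i) - u2 (m - i))"
      if "i < m" for i using u[of "m - i"] that less.prems by simp
    have e1: "b1 m * of_nat (PP m) = - (\<Sum>i<m. u1 (m - i) * (b1 i * of_nat (PP i)) * of_nat (q i))"
    proof -
      have "b1 m * of_nat (PP m) = - (\<Sum>i<m. (u1 (m - i) / fact (m - i + 1)) * b1 i * of_nat (PP m))"
        using r1[OF m1 less.prems] by (simp add: sum_distrib_right)
      also have "\<dots> = - (\<Sum>i<m. u1 (m - i) * (b1 i * of_nat (PP i)) * of_nat (q i))"
        by (intro arg_cong[where f=uminus] sum.cong refl) (simp add: q)
      finally show ?thesis .
    qed
    have e2: "b2 m * of_nat (PP m) = - (\<Sum>i<m. u2 (m - i) * (b2 i * of_nat (PP i)) * of_nat (q i))"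
    proof -
      have "b2 m * of_nat (PP m) = - (\<Sum>i<m. (u2 (m - i) / fact (m - i + 1)) * b2 i * of_nat (PP m))"
        using r2[OF m1 less.prems] by (simp add: sum_distrib_right)
      also have "\<dots> = - (\<Sum>i<m. u2 (m - i) * (b2 i * of_nat (PP i)) * of_nat (q i))"
        by (intro arg_cong[where f=uminus] sum.cong refl) (simp add: q)
      finally show ?thesis .
    qed
    have A1: "pge p 0 (b1 m * of_nat (PP m))" unfolding e1
    proof (intro pge_uminus[OF pp] pge_sum[OF pp])
      fix i assume "i \<in> {..<m}"
      hence im: "i < m" by simp
      show "pge p 0 (u1 (m - i) * (b1 i * of_nat (PP i)) * of_nat (q i))"
        using pge_mult0r[OF pp pge_mult0l[OF pp conjunct1[OF uu[OF im]] conjunct1[OF IH[OF im]]] pge_nat[OF pp]] by simp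
    qed
    have A2: "pge p 0 (b2 m * of_nat (PP m))" unfolding e2
    proof (intro pge_uminus[OF pp] pge_sum[OF pp])
      fix i assume "i \<in> {..<m}"
      hence im: "i < m" by simp
      show "pge p 0 (u2 (m - i) * (b2 i * of_nat (PP i)) * of_nat (q i))"
        using pge_mult0r[OF pp pge_mult0l[OF pp conjunct1[OF conjunct2[OF uu[OF im]]] conjunct1[OF conjunct2[OF IH[OF im]]]] pge_nat[OF pp]] by simp
    qed
    have "(b1 m - b2 m) * of_nat (PP m) = - (\<Sum>i<m. ((u1 (m - i) - u2 (m - i)) * (b1 i * of_nat (PP i))
             + u2 (m - i) * ((b1 i - b2 i) * of_nat (PP i))) * of_nat (q i))"
    proof -
      have "(b1 m - b2 m) * of_nat (PP m) = - (\<Sum>i<m. u1 (m - i) * (b1 i * of_nat (PP i)) * of_nat (q i)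
          - u2 (m - i) * (b2 i * of_nat (PP i)) * of_nat (q i))"
        unfolding left_diff_distrib e1 e2 by (simp add: sum_subtractf)
      also have "\<dots> = - (\<Sum>i<m. ((u1 (m - i) - u2 (m - i)) * (b1 i * of_nat (PP i))
             + u2 (m - i) * ((b1 i - b2 i) * of_nat (PP i))) * of_nat (q i))"
        by (intro arg_cong[where f=uminus] sum.cong refl) (simp add: algebra_simps)
      finally show ?thesis .
    qed
    also have "pge p S \<dots>"
    proof (intro pge_uminus[OF pp] pge_sum[OF pp])
      fix i assume "i \<in> {..<m}"
      hence im: "i < m" by simp
      have "pge p S ((u1 (m - i) - u2 (m - i)) * (b1 i * of_nat (PP i)))"
        using pge_mult0r[OF pp conjunct2[OF conjunct2[OF uu[OF im]]] conjunct1[OF IH[OF im]]] by simp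
      moreover have "pge p S (u2 (m - i) * ((b1 i - b2 i) * of_nat (PP i)))"
        using pge_mult0l[OF pp conjunct1[OF conjunct2[OF uu[OF im]]] conjunct2[OF conjunct2[OF IH[OF im]]]] by simp
      ultimately show "pge p S (((u1 (m - i) - u2 (m - i)) * (b1 i * of_nat (PP i))
             + u2 (m - i) * ((b1 i - b2 i) * of_nat (PP i))) * of_nat (q i))"
        by (intro pge_mult0r[OF pp pge_add[OF pp] pge_nat[OF pp]])
    qed
    finally show ?thesis using A1 A2 by simp
  qed
qed




lemma factprod: "fact (k + N) = fact N * (\<Prod>j\<in>{1..k}. (N + j) :: nat)"
proof (induction k)
  case 0 thus ?case by simp
next
  case (Suc k)
  have "fact (Suc k + N) = (Suc k + N) * (fact (k + N) :: nat)" by simp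
  also have "\<dots> = fact N * (\<Prod>j\<in>{1..Suc k}. (N + j))"
    using Suc by (simp add: prod.nat_ivl_Suc' algebra_simps)
  finally show ?case .
qed

lemma pge_prod_unit:
  assumes pp: "prime p" and S0: "S \<ge> 0"
    and h: "\<And>j. j \<in> A \<Longrightarrow> pge p 0 (f j) \<and> pge p S (f j - 1)"
  shows "pge p 0 (prod f A) \<and> pge p S (prod f A - 1)"
  using h
proof (induction A rule: infinite_finite_induct)
  case (infinite A) thus ?case using pp by (simp add: pge_0 pge_int[of p 1, simplified])
next
  case empty thus ?case using pp by (simp add: pge_0 pge_int[of p 1, simplified])
next
  case (insert x F)
  have fx: "pge p 0 (f x)" "pge p S (f x - 1)" using insert.prems by auto
  have IH: "pge p 0 (prod f F)" "pge p S (prod f F - 1)" using insert.IH insert.prems by auto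
  have e: "prod f (insert x F) = f x * prod f F" using insert.hyps by simp
  have e2: "f x * prod f F - 1 = (f x - 1) * prod f F + (prod f F - 1)" by (simp add: algebra_simps)
  have A: "pge p S ((f x - 1) * prod f F + (prod f F - 1))"
    by (intro pge_add[OF pp] pge_mult0r[OF pp fx(2) IH(1)] IH(2))
  have B: "pge p 0 (f x * prod f F)"
    using pge_mult[OF pp fx(1) IH(1)] by simp
  show ?case unfolding e e2 using A B by simp
qed

theorem corollary1:
  fixes p N n \<nu> :: nat
  assumes "prime p" and "N \<ge> 1" and "n \<ge> 1"
    and "\<not> (p - 1) dvd n"
    and "N = 1 \<or> multiplicity p (N - 1) \<ge>
           \<nu> + 1 + multiplicity p (\<Prod>k=0..n. fact (1 + k) :: nat) + multiplicity p n"
  shows "qcong p (\<nu> + 1) (hyp_bernoulli N n / of_nat n) (bernoulli_num n / of_nat n)"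
proof (cases "N = 1")
  case True
  thus ?thesis unfolding qcong_def by (simp add: bern_hyp1)
next
  case False
  have pp: "prime p" and N1: "N \<ge> 1" and n1: "n \<ge> 1" and ndv: "\<not> (p - 1) dvd n"
    using assms by auto
  define M where "M = multiplicity p (N - 1)"
  define L where "L = multiplicity p (PP n)"
  define T where "T = multiplicity p (fact n :: nat)"
  define S where "S = int M - int T"
  have HM: "M \<ge> \<nu> + 1 + L + multiplicity p n"
    using assms(5) False unfolding M_def L_def PP_def by simp
  have TL: "T \<le> L"
  proof -
    have "fact n dvd (fact (1 + n) :: nat)" by (rule fact_dvd) simp
    also have "fact (1 + n) dvd PP n" unfolding PP_def by (intro dvd_prodI) auto
    finally show ?thesis unfolding T_def L_def using PP_pos[of n]
      by (intro dvd_imp_multiplicity_le) auto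
  qed
  have S1: "S \<ge> 1" unfolding S_def using HM TL by linarith
  have pgeN: "pge p (int M) (of_nat (N - 1))"
  proof -
    obtain c where c: "N - 1 = p ^ M * c" using multiplicity_dvd[of p "N - 1"] unfolding M_def by (auto elim: dvdE)
    have "(of_nat (N - 1) :: rat) = of_int (int c) * of_nat p ^ M" unfolding c by simp
    thus ?thesis using pge_mult[OF pp pge_int[OF pp, of "int c"] pge_ppow[OF pp, of M]] by simp
  qed
  have ordj: "multiplicity p (1 + j) \<le> T" if "j \<le> n" for j
  proof (cases "j = n")
    case True thus ?thesis unfolding T_def using ord_succ[OF pp ndv n1] by simp
  next
    case False
    hence "(1 + j) dvd (fact n :: nat)" using that by (intro dvd_fact) auto
    thus ?thesis unfolding T_def by (intro dvd_imp_multiplicity_le) auto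
  qed
  define u where "u k = (fact N / fact (k + N) * fact (k + 1) :: rat)" for k
  have u_prod: "u k = (\<Prod>j\<in>{1..k}. 1 / (1 + of_nat (N - 1) / of_nat (1 + j)))" for k
  proof -
    have f1: "(fact (k + N) :: rat) = fact N * (\<Prod>j\<in>{1..k}. of_nat (N + j))"
      using arg_cong[OF factprod[of k N], of "of_nat :: nat \<Rightarrow> rat"] by (simp add: of_nat_prod)
    have f2n: "fact (k + 1) = (\<Prod>j\<in>{1..k}. (1 + j) :: nat)"
      using factprod[of k 1] by (simp only: fact_1 mult_1)
    have f2: "(fact (k + 1) :: rat) = (\<Prod>j\<in>{1..k}. of_nat (1 + j))"
      using arg_cong[OF f2n, of "of_nat :: nat \<Rightarrow> rat"] by (simp only: of_nat_fact of_nat_prod)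
    have "u k = (\<Prod>j\<in>{1..k}. of_nat (1 + j)) / (\<Prod>j\<in>{1..k}. of_nat (N + j))"
      unfolding u_def f1 f2 by simp
    also have "\<dots> = (\<Prod>j\<in>{1..k}. of_nat (1 + j) / of_nat (N + j))" by (rule prod_dividef[symmetric])
    also have "\<dots> = (\<Prod>j\<in>{1..k}. 1 / (1 + of_nat (N - 1) / of_nat (1 + j)))"
    proof (intro prod.cong refl)
      fix j :: nat
      have e: "(of_nat (N + j) :: rat) = of_nat (1 + j) + of_nat (N - 1)" using N1 by simp
      show "(of_nat (1 + j) / of_nat (N + j) :: rat) = 1 / (1 + of_nat (N - 1) / of_nat (1 + j))"
        unfolding e by (simp add: field_simps)
    qed
    finally show ?thesis .
  qed
  have u_pge: "pge p 0 (u k) \<and> pge p S (u k - 1)" if "k \<le> n" for k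
    unfolding u_prod
  proof (rule pge_prod_unit[OF pp])
    show "S \<ge> 0" using S1 by simp
    fix j assume j: "j \<in> {1..k}"
    have t: "pge p S (of_nat (N - 1) / of_nat (1 + j))"
    proof -
      have "pge p (int M + - int (multiplicity p (1 + j))) (of_nat (N - 1) * (1 / of_nat (1 + j)))"
        by (rule pge_mult[OF pp pgeN pge_nat_mult(2)[OF pp]]) simp
      moreover have "S \<le> int M + - int (multiplicity p (1 + j))"
        unfolding S_def using ordj[of j] j that by simp
      ultimately show ?thesis using pge_mono[OF pp] by simp
    qed
    show "pge p 0 (1 / (1 + of_nat (N - 1) / of_nat (1 + j))) \<and>
          pge p S (1 / (1 + of_nat (N - 1) / of_nat (1 + j)) - 1)"
      using pge_unit[OF pp t S1] by simp
  qed
  define b1 where "b1 m = hyp_bernoulli N m / fact m" for m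
  define b2 where "b2 m = hyp_bernoulli 1 m / fact m" for m
  have cu: "(fact K / fact (k + K) :: rat) = (if K = N then u k else 1) / fact (k + 1)" if "K = N \<or> K = 1" for K k
    using that unfolding u_def by auto
  have r1: "b1 m = - (\<Sum>i<m. (u (m - i) / fact (m - i + 1)) * b1 i)" if "1 \<le> m" "m \<le> n" for m
  proof -
    have cuN: "(fact N / fact (k + N) :: rat) = u k / fact (k + 1)" for k
      unfolding u_def by simp
    have "b1 m = - (\<Sum>i<m. (fact N / fact (m - i + N)) * b1 i)"
      using hyp_rec(2)[OF N1 that(1)] unfolding b1_def .
    also have "\<dots> = - (\<Sum>i<m. (u (m - i) / fact (m - i + 1)) * b1 i)"
      by (simp only: cuN)
    finally show ?thesis .
  qed
  have r2: "b2 m = - (\<Sum>i<m. ((\<lambda>_. 1) (m - i) / fact (m - i + 1)) * b2 i)" if "1 \<le> m" "m \<le> n" for m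
    unfolding b2_def using hyp_rec(2)[of 1, OF _ that(1)] cu[of 1] False by simp
  have MI: "pge p S ((b1 n - b2 n) * of_nat (PP n))"
    using main_ind[OF pp _ _ _ r1 r2, of S n] u_pge S1 hyp_rec(1)[OF N1] hyp_rec(1)[of 1]
    unfolding b1_def b2_def by (simp add: pge_int[OF pp, of 1, simplified])
  have eq: "hyp_bernoulli N n / of_nat n - bernoulli_num n / of_nat n =
      ((b1 n - b2 n) * of_nat (PP n)) * (of_nat (fact n) * ((1 / of_nat n) * (1 / of_nat (PP n))))"
    unfolding b1_def b2_def bern_hyp1 using PP_pos[of n] n1 by (simp add: field_simps)
  have "pge p (S + (int T + (- int (multiplicity p n) + - int L))) (hyp_bernoulli N n / of_nat n - bernoulli_num n / of_nat n)"
    unfolding eq T_def L_def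
    using n1 by (intro pge_mult[OF pp] MI pge_nat_mult[OF pp]) (auto simp: PP_pos fact_gt_zero)
  moreover have "int (\<nu> + 1) \<le> S + (int T + (- int (multiplicity p n) + - int L))"
    unfolding S_def using HM by linarith
  ultimately have P: "pge p (int (\<nu> + 1)) (hyp_bernoulli N n / of_nat n - bernoulli_num n / of_nat n)"
    using pge_mono[OF pp] by blast
  show ?thesis unfolding qcong_def
  proof (cases "hyp_bernoulli N n / of_nat n - bernoulli_num n / of_nat n = 0")
    case True thus "hyp_bernoulli N n / of_nat n = bernoulli_num n / of_nat n \<or>
      int (\<nu> + 1) \<le> ord_rat p (hyp_bernoulli N n / of_nat n - bernoulli_num n / of_nat n)" by simp
  next
    case False thus "hyp_bernoulli N n / of_nat n = bernoulli_num n / of_nat n \<or>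
      int (\<nu> + 1) \<le> ord_rat p (hyp_bernoulli N n / of_nat n - bernoulli_num n / of_nat n)"
      using pge_ord[OF pp False P] by simp
  qed
qed


end
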